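(* Let $\mathcal C$ be an energy timed path forming a cycle from state $s_0$ back to $s_0$, and let $L\in\mathbb Q$. For $U\in\mathbb Q$ let $\mathcal R_{\mathcal C}(w_0,w_1,U)$ denote $\mathcal R^{[L;U]}_{\mathcal C}(w_0,w_1)$, and define $$\mathcal R^\infty_{\mathcal C}(a,b,U)\iff L\le a\le b\le U\ \wedge\ \forall w_0\in[a;b].\ \exists w_1\in[a;b].\ \mathcal R_{\mathcal C}(w_0,w_1,U).$$ Assume the set $\{(a,b,U)\mid \mathcal R^\infty_{\mathcal C}(a,b,U)\}$ is nonempty. Then there is a least value $a^{\mathcal C}_{\min}\in\mathbb Q$ such that $\{(b,U)\mid \mathcal R^\infty_{\mathcal C}(a^{\mathcal C}_{\min},b,U)\}\neq\emptyset$, and: (1) for every energy level $w<a^{\mathcal C}_{\min}$ and every $U$, there is no infinite run from $(s_0,\mathbf 0,w)$ iterating $\mathcal C$ forever and satisfying the energy constraint $[L;U]$; (2) for every $w\ge a^{\mathcal C}_{\min}$ there exist $U$ and an infinite run from $(s_0,\mathbf 0,w)$ iterating $\mathcal C$ forever and satisfying $[L;U]$.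
   Context: An energy timed automaton is a timed automaton with closed (non-strict) clock constraints, a rational energy rate $r(s)$ in each state and a rational energy update $u$ on each transition; during a delay $d\ge0$ in state $s$ the energy grows by $d\cdot r(s)$, and a transition adds $u$. An energy timed path (ETP) from $s_0$ to $s_n$ is such an automaton whose states $s_0,\dots,s_n$ are linked by exactly one transition from $s_i$ to $s_{i+1}$ each; a cycle is an ETP whose last state is identified with its first state $s_0$. A run satisfies the energy constraint $[L;U]$ if all its energy levels lie in $[L;U]$. For an energy constraint $E$, $\mathcal R^E_{\mathcal C}(w_0,w_1)$ holds iff there is a finite run of $\mathcal C$ from $(s_0,\mathbf 0,w_0)$ to $(s_0,\mathbf 0,w_1)$ satisfying $E$ ($\mathbf 0$ the zero clock valuation). An infinite run iterating $\mathcal C$ forever is a concatenation of infinitely many runs of $\mathcal C$, each starting and ending with all clocks $0$, the final energy of one being the initial energy of the next. *)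

theory Defs
  imports Complex_Main
begin

text \<open>Closed (non-strict) atomic clock constraints x <= k and x >= k with
  integer (natural) constants k; x = k is the conjunction of both.
  A clock constraint is a conjunction (list) of atoms.\<close>

datatype 'c atom = CLe 'c nat | CGe 'c nat

type_synonym 'c constr = "'c atom list"

fun sat_atom :: "'c atom \<Rightarrow> ('c \<Rightarrow> real) \<Rightarrow> bool" where
  "sat_atom (CLe x k) v = (v x \<le> real k)"
| "sat_atom (CGe x k) v = (v x \<ge> real k)"

definition sat :: "'c constr \<Rightarrow> ('c \<Rightarrow> real) \<Rightarrow> bool" where
  "sat g v = (\<forall>a\<in>set g. sat_atom a v)"

text \<open>An energy timed path with states s_0, ..., s_len (state s_i is index i).
  inv i: invariant of s_i; rate i: energy rate of s_i; for i < len, the unique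
  transition from s_i to s_(i+1) has guard guard i, energy update upd i and
  resets the clocks in reset i.\<close>

record 'c etp =
  len   :: nat
  inv   :: "nat \<Rightarrow> 'c constr"
  rate  :: "nat \<Rightarrow> rat"
  guard :: "nat \<Rightarrow> 'c constr"
  upd   :: "nat \<Rightarrow> rat"
  reset :: "nat \<Rightarrow> 'c set"

text \<open>A cycle: the last state s_len is identified with s_0.\<close>

definition is_cycle :: "'c etp \<Rightarrow> bool" where
  "is_cycle C \<longleftrightarrow> 0 < len C \<and> inv C (len C) = inv C 0 \<and> rate C (len C) = rate C 0"

definition zero_val :: "'c \<Rightarrow> real" where
  "zero_val = (\<lambda>_. 0)"

definition etp_run :: "'c etp \<Rightarrow> rat \<Rightarrow> rat \<Rightarrow> ('c \<Rightarrow> real) \<Rightarrow> real \<Rightarrow> ('c \<Rightarrow> real) \<Rightarrow> real \<Rightarrow> bool" where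
  "etp_run C L U v0 w0 v1 w1 \<longleftrightarrow>
     (\<exists>(d :: nat \<Rightarrow> real) (v :: nat \<Rightarrow> 'c \<Rightarrow> real) (e :: nat \<Rightarrow> real).
        v 0 = v0 \<and> e 0 = w0 \<and> v (len C) = v1 \<and> e (len C) = w1 \<and>
        (\<forall>i < len C.
           0 \<le> d i \<and>
           (\<forall>t. 0 \<le> t \<and> t \<le> d i \<longrightarrow>
                 sat (inv C i) (\<lambda>x. v i x + t) \<and>
                 real_of_rat L \<le> e i + t * real_of_rat (rate C i) \<and>
                 e i + t * real_of_rat (rate C i) \<le> real_of_rat U) \<and>
           sat (guard C i) (\<lambda>x. v i x + d i) \<and>
           v (Suc i) = (\<lambda>x. if x \<in> reset C i then 0 else v i x + d i) \<and>
           e (Suc i) = e i + d i * real_of_rat (rate C i) + real_of_rat (upd C i)) \<and>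
        sat (inv C (len C)) v1 \<and>
        real_of_rat L \<le> w1 \<and> w1 \<le> real_of_rat U)"

definition R :: "'c etp \<Rightarrow> rat \<Rightarrow> real \<Rightarrow> real \<Rightarrow> rat \<Rightarrow> bool" where
  "R C L w0 w1 U \<longleftrightarrow> etp_run C L U zero_val w0 zero_val w1"

definition Rinf :: "'c etp \<Rightarrow> rat \<Rightarrow> rat \<Rightarrow> rat \<Rightarrow> rat \<Rightarrow> bool" where
  "Rinf C L a b U \<longleftrightarrow> L \<le> a \<and> a \<le> b \<and> b \<le> U \<and>
     (\<forall>w0. real_of_rat a \<le> w0 \<and> w0 \<le> real_of_rat b \<longrightarrow>
        (\<exists>w1. real_of_rat a \<le> w1 \<and> w1 \<le> real_of_rat b \<and> R C L w0 w1 U))"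

text \<open>An infinite run from (s_0, 0, w) iterating C forever satisfying [L;U]:
  a concatenation of infinitely many runs of C, each from clocks 0 to clocks 0,
  the final energy of one being the initial energy of the next.\<close>

definition inf_run :: "'c etp \<Rightarrow> rat \<Rightarrow> rat \<Rightarrow> real \<Rightarrow> bool" where
  "inf_run C L U w \<longleftrightarrow>
     (\<exists>ws :: nat \<Rightarrow> real. ws 0 = w \<and> (\<forall>k. R C L (ws k) (ws (Suc k)) U))"

end

theory Submission
  imports Defs
begin

type_synonym 'v lc = "('v \<Rightarrow> real) \<times> real"

definition ev :: "'v set \<Rightarrow> ('v \<Rightarrow> real) \<Rightarrow> ('v \<Rightarrow> real) \<Rightarrow> real" where
  "ev V c y = (\<Sum>v\<in>V. c v * y v)"

definition lsat1 :: "'v set \<Rightarrow> 'v lc \<Rightarrow> ('v \<Rightarrow> real) \<Rightarrow> bool" where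
  "lsat1 V p y \<longleftrightarrow> ev V (fst p) y \<le> snd p"

definition lsat :: "'v set \<Rightarrow> 'v lc set \<Rightarrow> ('v \<Rightarrow> real) \<Rightarrow> bool" where
  "lsat V cs y \<longleftrightarrow> (\<forall>p\<in>cs. lsat1 V p y)"

definition ratc :: "'v lc set \<Rightarrow> bool" where
  "ratc cs \<longleftrightarrow> (\<forall>p\<in>cs. snd p \<in> \<rat> \<and> (\<forall>v. fst p v \<in> \<rat>))"

lemma ev_upd:
  assumes "finite V" "z \<in> V"
  shows "ev V c (y(z:=t)) = ev V c y + c z * (t - y z)"
proof -
  have "ev V c (y(z:=t)) = c z * t + (\<Sum>v\<in>V-{z}. c v * y v)"
    unfolding ev_def using assms by (simp add: sum.remove)
  moreover have "ev V c y = c z * y z + (\<Sum>v\<in>V-{z}. c v * y v)"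
    unfolding ev_def using assms by (simp add: sum.remove)
  ultimately show ?thesis by (simp add: algebra_simps)
qed

lemma ev_lin:
  "ev V (\<lambda>v. a * c1 v + b * c2 v) y = a * ev V c1 y + b * ev V c2 y"
  unfolding ev_def by (simp add: sum.distrib sum_distrib_left algebra_simps)

lemma ev_conv:
  "ev V c (\<lambda>v. a * y1 v + b * y2 v) = a * ev V c y1 + b * ev V c y2"
  unfolding ev_def by (simp add: sum.distrib sum_distrib_left algebra_simps)

lemma ev_cong: "(\<And>v. v \<in> V \<Longrightarrow> y v = y' v) \<Longrightarrow> ev V c y = ev V c y'"
  unfolding ev_def by (rule sum.cong) auto

lemma lsat_cong: "(\<And>v. v \<in> V \<Longrightarrow> y v = y' v) \<Longrightarrow> lsat V cs y = lsat V cs y'"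
  unfolding lsat_def lsat1_def using ev_cong by metis

lemma lsat_convex:
  assumes "lsat V cs y1" "lsat V cs y2" "0 \<le> a" "a \<le> 1"
  shows "lsat V cs (\<lambda>v. a * y1 v + (1 - a) * y2 v)"
  unfolding lsat_def lsat1_def
proof
  fix p assume p: "p \<in> cs"
  have 1: "ev V (fst p) y1 \<le> snd p" "ev V (fst p) y2 \<le> snd p"
    using assms p unfolding lsat_def lsat1_def by auto
  have "a * ev V (fst p) y1 + (1 - a) * ev V (fst p) y2 \<le> a * snd p + (1 - a) * snd p"
    using 1 assms by (intro add_mono mult_left_mono) auto
  moreover have "ev V (fst p) (\<lambda>v. a * y1 v + (1 - a) * y2 v) = a * ev V (fst p) y1 + (1 - a) * ev V (fst p) y2"
    by (rule ev_conv)
  ultimately show "ev V (fst p) (\<lambda>v. a * y1 v + (1 - a) * y2 v) \<le> snd p"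
    by (simp add: algebra_simps)
qed

definition comb :: "'v \<Rightarrow> 'v lc \<Rightarrow> 'v lc \<Rightarrow> 'v lc" where
  "comb z p q = ((\<lambda>v. (- fst q z) * fst p v + fst p z * fst q v),
                 (- fst q z) * snd p + fst p z * snd q)"

definition fm :: "'v \<Rightarrow> 'v lc set \<Rightarrow> 'v lc set" where
  "fm z cs = {p \<in> cs. fst p z = 0} \<union>
     (\<lambda>(p,q). comb z p q) ` {(p,q). p \<in> cs \<and> q \<in> cs \<and> fst p z > 0 \<and> fst q z < 0}"

lemma fm_finite: "finite cs \<Longrightarrow> finite (fm z cs)"
proof -
  assume f: "finite cs"
  have "{(p,q). p \<in> cs \<and> q \<in> cs \<and> fst p z > 0 \<and> fst q z < 0} \<subseteq> cs \<times> cs" by auto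
  then have "finite {(p,q). p \<in> cs \<and> q \<in> cs \<and> fst p z > 0 \<and> fst q z < 0}"
    using f finite_subset by blast
  then show ?thesis unfolding fm_def using f by auto
qed

lemma fm_rat: assumes "ratc cs" shows "ratc (fm z cs)"
  unfolding ratc_def
proof
  fix p assume "p \<in> fm z cs"
  then consider "p \<in> cs"
      | p1 p2 where "p = comb z p1 p2" "p1 \<in> cs" "p2 \<in> cs"
      unfolding fm_def by auto
  then show "snd p \<in> \<rat> \<and> (\<forall>v. fst p v \<in> \<rat>)"
  proof cases
    case 1 then show ?thesis using assms unfolding ratc_def by auto
  next
    case 2
    then have r: "snd p1 \<in> \<rat>" "snd p2 \<in> \<rat>" "\<And>v. fst p1 v \<in> \<rat>" "\<And>v. fst p2 v \<in> \<rat>"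
      using assms unfolding ratc_def by auto
    show ?thesis unfolding 2 comb_def using r by (auto intro!: Rats_add Rats_mult)
  qed
qed

lemma fm_zero: "p \<in> fm z cs \<Longrightarrow> fst p z = 0"
  unfolding fm_def comb_def by (auto simp: algebra_simps)

lemma fm_keep: "\<forall>p\<in>cs. fst p w = 0 \<Longrightarrow> p \<in> fm z cs \<Longrightarrow> fst p w = 0"
  unfolding fm_def comb_def apply auto by (metis fst_conv mult_eq_0_iff)+

lemma fm_correct:
  assumes V: "finite V" "z \<in> V" and f: "finite cs"
  shows "lsat V (fm z cs) x \<longleftrightarrow> (\<exists>t. lsat V cs (x(z:=t)))"
proof
  assume "\<exists>t. lsat V cs (x(z:=t))"
  then obtain t where t: "lsat V cs (x(z:=t))" by blast
  show "lsat V (fm z cs) x"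
    unfolding lsat_def
  proof
    fix p assume "p \<in> fm z cs"
    then consider "p \<in> cs" "fst p z = 0"
      | p1 p2 where "p = comb z p1 p2" "p1 \<in> cs" "p2 \<in> cs" "fst p1 z > 0" "fst p2 z < 0"
      unfolding fm_def by auto
    then show "lsat1 V p x"
    proof cases
      case 1
      then show ?thesis using t ev_upd[OF V, of "fst p" x t]
        unfolding lsat_def lsat1_def by auto
    next
      case 2
      have a: "ev V (fst p1) x + fst p1 z * (t - x z) \<le> snd p1"
        using t 2 ev_upd[OF V, of "fst p1" x t] unfolding lsat_def lsat1_def by auto
      have b: "ev V (fst p2) x + fst p2 z * (t - x z) \<le> snd p2"
        using t 2 ev_upd[OF V, of "fst p2" x t] unfolding lsat_def lsat1_def by auto
      have a': "(- fst p2 z) * (ev V (fst p1) x + fst p1 z * (t - x z)) \<le> (- fst p2 z) * snd p1"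
        using a 2 by (intro mult_left_mono) auto
      have b': "fst p1 z * (ev V (fst p2) x + fst p2 z * (t - x z)) \<le> fst p1 z * snd p2"
        using b 2 by (intro mult_left_mono) auto
      have "ev V (fst p) x = (- fst p2 z) * ev V (fst p1) x + fst p1 z * ev V (fst p2) x"
        unfolding 2(1) comb_def fst_conv by (rule ev_lin)
      also have "\<dots> \<le> snd p" using a' b' 2 by (simp add: comb_def algebra_simps)
      finally show ?thesis unfolding lsat1_def .
    qed
  qed
next
  assume H: "lsat V (fm z cs) x"
  define \<beta> where "\<beta> p = (snd p - ev V (fst p) x + fst p z * x z) / fst p z" for p :: "'a lc"
  define N where "N = {p \<in> cs. fst p z < 0}"
  define P where "P = {p \<in> cs. fst p z > 0}"
  have fN: "finite (\<beta> ` N)" "finite (\<beta> ` P)" using f unfolding N_def P_def by auto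
  have key: "\<beta> q \<le> \<beta> p" if "p \<in> P" "q \<in> N" for p q
  proof -
    have "comb z p q \<in> fm z cs" using that unfolding fm_def P_def N_def by auto
    then have "ev V (fst (comb z p q)) x \<le> snd (comb z p q)"
      using H unfolding lsat_def lsat1_def by auto
    moreover have "ev V (fst (comb z p q)) x = (- fst q z) * ev V (fst p) x + fst p z * ev V (fst q) x"
      unfolding comb_def fst_conv by (rule ev_lin)
    ultimately have h: "(- fst q z) * ev V (fst p) x + fst p z * ev V (fst q) x
        \<le> (- fst q z) * snd p + fst p z * snd q"
      by (simp add: comb_def)
    have pz: "fst p z > 0" and qz: "fst q z < 0" using that unfolding P_def N_def by auto
    have e1: "fst p z * \<beta> p = snd p - ev V (fst p) x + fst p z * x z"
      using pz unfolding \<beta>_def by simp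
    have e2: "fst q z * \<beta> q = snd q - ev V (fst q) x + fst q z * x z"
      using qz unfolding \<beta>_def by simp
    have "fst p z * fst q z * (\<beta> q - \<beta> p) \<ge> 0"
    proof -
      have "fst p z * fst q z * (\<beta> q - \<beta> p) = fst p z * (fst q z * \<beta> q) - fst q z * (fst p z * \<beta> p)"
        by (simp add: algebra_simps)
      also have "\<dots> = (- fst q z) * snd p + fst p z * snd q - ((- fst q z) * ev V (fst p) x + fst p z * ev V (fst q) x)"
        unfolding e1 e2 by (simp add: algebra_simps)
      finally show ?thesis using h by simp
    qed
    moreover have "fst p z * fst q z < 0" using pz qz by (simp add: mult_pos_neg)
    ultimately show ?thesis by (smt (verit) mult_less_0_iff)
  qed
  define t where "t = (if N \<noteq> {} then Max (\<beta> ` N) else if P \<noteq> {} then Min (\<beta> ` P) else x z)"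
  have tP: "t \<le> \<beta> p" if "p \<in> P" for p
  proof (cases "N \<noteq> {}")
    case True
    then have "Max (\<beta> ` N) \<in> \<beta> ` N" using fN by auto
    then obtain q where "q \<in> N" "Max (\<beta> ` N) = \<beta> q" by auto
    then show ?thesis using key[OF that] True unfolding t_def by simp
  next
    case False
    then show ?thesis using that fN unfolding t_def by auto
  qed
  have tN: "\<beta> q \<le> t" if "q \<in> N" for q
    using that fN unfolding t_def by auto
  have "lsat V cs (x(z:=t))"
    unfolding lsat_def lsat1_def
  proof
    fix p assume p: "p \<in> cs"
    have ee: "ev V (fst p) (x(z:=t)) = ev V (fst p) x + fst p z * (t - x z)"
      using ev_upd[OF V] by blast
    consider "fst p z = 0" | "fst p z > 0" | "fst p z < 0" by linarith
    then show "ev V (fst p) (x(z := t)) \<le> snd p"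
    proof cases
      case 1
      then have "p \<in> fm z cs" using p unfolding fm_def by auto
      then show ?thesis using H 1 ee unfolding lsat_def lsat1_def by auto
    next
      case 2
      then have "t \<le> \<beta> p" using tP p unfolding P_def by auto
      then have "fst p z * t \<le> fst p z * \<beta> p" using 2 by (simp add: mult_left_mono)
      also have "\<dots> = snd p - ev V (fst p) x + fst p z * x z" using 2 unfolding \<beta>_def by simp
      finally show ?thesis using ee by (simp add: algebra_simps)
    next
      case 3
      then have "\<beta> p \<le> t" using tN p unfolding N_def by auto
      then have "fst p z * t \<le> fst p z * \<beta> p" using 3 by (simp add: mult_left_mono_neg)
      also have "\<dots> = snd p - ev V (fst p) x + fst p z * x z" using 3 unfolding \<beta>_def by simp
      finally show ?thesis using ee by (simp add: algebra_simps)
    qed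
  qed
  then show "\<exists>t. lsat V cs (x(z:=t))" by blast
qed

lemma projection:
  assumes V: "finite V" and f: "finite cs" and W: "W \<subseteq> V"
  shows "\<exists>cs'. finite cs' \<and> (ratc cs \<longrightarrow> ratc cs') \<and> (\<forall>p\<in>cs'. \<forall>w\<in>W. fst p w = 0) \<and>
     (\<forall>x. lsat V cs' x \<longleftrightarrow> (\<exists>y. (\<forall>v. v \<notin> W \<longrightarrow> y v = x v) \<and> lsat V cs y))"
proof -
  have "finite W" using W V finite_subset by blast
  then show ?thesis using W
  proof (induction W rule: finite_induct)
    case empty
    show ?case
      apply (rule exI[of _ cs])
      using f by auto (metis ext)
  next
    case (insert w W)
    then obtain cs' where cs': "finite cs'" "ratc cs \<longrightarrow> ratc cs'" "\<forall>p\<in>cs'. \<forall>w\<in>W. fst p w = 0"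
      "\<forall>x. lsat V cs' x \<longleftrightarrow> (\<exists>y. (\<forall>v. v \<notin> W \<longrightarrow> y v = x v) \<and> lsat V cs y)" by auto
    have wV: "w \<in> V" using insert by auto
    show ?case
    proof (intro exI[of _ "fm w cs'"] conjI allI)
      show "finite (fm w cs')" using cs' fm_finite by auto
      show "ratc cs \<longrightarrow> ratc (fm w cs')" using cs' fm_rat by auto
      show "\<forall>p\<in>fm w cs'. \<forall>v\<in>insert w W. fst p v = 0"
        using cs'(3) fm_zero fm_keep by fastforce
    next
      fix x
      have "lsat V (fm w cs') x \<longleftrightarrow> (\<exists>t. lsat V cs' (x(w:=t)))"
        using fm_correct[OF V wV cs'(1)] .
      also have "\<dots> \<longleftrightarrow> (\<exists>t y. (\<forall>v. v \<notin> W \<longrightarrow> y v = (x(w:=t)) v) \<and> lsat V cs y)"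
        using cs'(4) by blast
      also have "\<dots> \<longleftrightarrow> (\<exists>y. (\<forall>v. v \<notin> insert w W \<longrightarrow> y v = x v) \<and> lsat V cs y)"
      proof
        assume "\<exists>t y. (\<forall>v. v \<notin> W \<longrightarrow> y v = (x(w:=t)) v) \<and> lsat V cs y"
        then show "\<exists>y. (\<forall>v. v \<notin> insert w W \<longrightarrow> y v = x v) \<and> lsat V cs y" by (metis fun_upd_other insertI2 insertCI)
      next
        assume "\<exists>y. (\<forall>v. v \<notin> insert w W \<longrightarrow> y v = x v) \<and> lsat V cs y"
        then obtain y where "\<forall>v. v \<notin> insert w W \<longrightarrow> y v = x v" "lsat V cs y" by blast
        then show "\<exists>t y. (\<forall>v. v \<notin> W \<longrightarrow> y v = (x(w:=t)) v) \<and> lsat V cs y"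
          using insert.hyps(2) by (intro exI[of _ "y w"] exI[of _ y]) auto
      qed
      finally show "lsat V (fm w cs') x \<longleftrightarrow> (\<exists>y. (\<forall>v. v \<notin> insert w W \<longrightarrow> y v = x v) \<and> lsat V cs y)" .
    qed
  qed
qed

definition sat1 :: "(real \<times> real) set \<Rightarrow> real \<Rightarrow> bool" where
  "sat1 S t \<longleftrightarrow> (\<forall>p\<in>S. fst p * t \<le> snd p)"

lemma sat1_min:
  assumes f: "finite S" and r: "\<forall>p\<in>S. fst p \<in> \<rat> \<and> snd p \<in> \<rat>"
    and t0: "sat1 S t0" and lb: "\<forall>t. sat1 S t \<longrightarrow> lb \<le> t"
  shows "\<exists>q\<in>\<rat>. sat1 S q \<and> (\<forall>t. sat1 S t \<longrightarrow> q \<le> t)"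
proof -
  define N where "N = {p\<in>S. fst p < 0}"
  define B where "B = (\<lambda>p. snd p / fst p) ` N"
  have fB: "finite B" using f unfolding B_def N_def by auto
  have lowN: "b \<le> t" if h: "sat1 S t" "b \<in> B" for t b
  proof -
    obtain p where p: "p \<in> S" "fst p < 0" "b = snd p / fst p" using h(2) unfolding B_def N_def by auto
    have "fst p * t \<le> snd p" using h(1) p unfolding sat1_def by auto
    then show ?thesis using p by (simp add: divide_le_eq mult.commute)
  qed
  have Bne: "B \<noteq> {}"
  proof
    assume B0: "B = {}"
    define t where "t = min t0 (lb - 1)"
    have "sat1 S t" unfolding sat1_def
    proof
      fix p assume p: "p \<in> S"
      have h: "fst p * t0 \<le> snd p" using t0 p unfolding sat1_def by auto
      have "fst p \<ge> 0"
      proof (rule ccontr)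
        assume "\<not> fst p \<ge> 0"
        then have "snd p / fst p \<in> B" using p unfolding B_def N_def by auto
        then show False using B0 by auto
      qed
      then have "fst p * t \<le> fst p * t0" unfolding t_def by (simp add: mult_left_mono)
      then show "fst p * t \<le> snd p" using h by linarith
    qed
    then show False using lb unfolding t_def by fastforce
  qed
  define q where "q = Max B"
  have qB: "q \<in> B" using fB Bne unfolding q_def by auto
  have qR: "q \<in> \<rat>" using qB r unfolding B_def N_def by auto
  have qle: "q \<le> t" if "sat1 S t" for t
    using qB lowN that by auto
  have "sat1 S q" unfolding sat1_def
  proof
    fix p assume p: "p \<in> S"
    consider "fst p < 0" | "fst p = 0" | "fst p > 0" by linarith
    then show "fst p * q \<le> snd p"
    proof cases
      case 1
      then have "snd p / fst p \<in> B" using p unfolding B_def N_def by auto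
      then have "snd p / fst p \<le> q" using fB unfolding q_def by auto
      then show ?thesis using 1 by (simp add: divide_le_eq mult.commute)
    next
      case 2 then show ?thesis using t0 p unfolding sat1_def by auto
    next
      case 3
      have "fst p * q \<le> fst p * t0" using qle[OF t0] 3 by (simp add: mult_left_mono)
      then show ?thesis using t0 p unfolding sat1_def by fastforce
    qed
  qed
  then show ?thesis using qR qle by blast
qed

lemma sat1_rat:
  assumes f: "finite S" and r: "\<forall>p\<in>S. fst p \<in> \<rat> \<and> snd p \<in> \<rat>"
    and t0: "sat1 S t0"
  shows "\<exists>q\<in>\<rat>. sat1 S q"
proof (cases "\<forall>t. sat1 S t \<longrightarrow> of_int (floor t0) - 1 \<le> t")
  case True
  then show ?thesis using sat1_min[OF f r t0] by blast
next
  case False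
  then obtain t where t: "sat1 S t" "t < of_int (floor t0) - 1" by auto
  define q where "q = (of_int (floor t0) - 1 :: real)"
  have "q \<in> \<rat>" unfolding q_def by simp
  moreover have "sat1 S q" unfolding sat1_def
  proof
    fix p assume p: "p \<in> S"
    have h1: "fst p * t \<le> snd p" "fst p * t0 \<le> snd p" using t t0 p unfolding sat1_def by auto
    have "q \<le> t0" unfolding q_def by linarith
    have "t \<le> q" using t unfolding q_def by simp
    show "fst p * q \<le> snd p"
    proof (cases "fst p \<ge> 0")
      case True
      then have "fst p * q \<le> fst p * t0" using \<open>q \<le> t0\<close> by (simp add: mult_left_mono)
      then show ?thesis using h1 by linarith
    next
      case False
      then have "fst p * q \<le> fst p * t" using \<open>t \<le> q\<close> by (simp add: mult_left_mono_neg)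
      then show ?thesis using h1 by linarith
    qed
  qed
  ultimately show ?thesis by blast
qed

lemma sat1_Inf:
  assumes X: "X \<noteq> {}" "bdd_below X" and s: "\<forall>x\<in>X. sat1 S x"
  shows "sat1 S (Inf X)"
  unfolding sat1_def
proof
  fix p assume p: "p \<in> S"
  obtain x where x: "x \<in> X" using X by auto
  show "fst p * Inf X \<le> snd p"
  proof (cases "fst p \<ge> 0")
    case True
    have "Inf X \<le> x" using x X by (simp add: cInf_lower)
    then have "fst p * Inf X \<le> fst p * x" using True by (simp add: mult_left_mono)
    then show ?thesis using s x p unfolding sat1_def by fastforce
  next
    case False
    have "snd p / fst p \<le> y" if "y \<in> X" for y
    proof -
      have "fst p * y \<le> snd p" using s that p unfolding sat1_def by auto
      then show ?thesis using False by (simp add: divide_le_eq mult.commute)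
    qed
    then have "snd p / fst p \<le> Inf X" using X by (intro cInf_greatest) auto
    then show ?thesis using False by (simp add: divide_le_eq mult.commute)
  qed
qed

lemma sat1_Sup:
  assumes X: "X \<noteq> {}" "bdd_above X" and s: "\<forall>x\<in>X. sat1 S x"
  shows "sat1 S (Sup X)"
  unfolding sat1_def
proof
  fix p assume p: "p \<in> S"
  obtain x where x: "x \<in> X" using X by auto
  show "fst p * Sup X \<le> snd p"
  proof (cases "fst p \<le> 0")
    case True
    have "x \<le> Sup X" using x X by (simp add: cSup_upper)
    then have "fst p * Sup X \<le> fst p * x" using True by (simp add: mult_left_mono_neg)
    then show ?thesis using s x p unfolding sat1_def by fastforce
  next
    case False
    have "y \<le> snd p / fst p" if "y \<in> X" for y
    proof -
      have "fst p * y \<le> snd p" using s that p unfolding sat1_def by auto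
      then show ?thesis using False by (simp add: le_divide_eq mult.commute)
    qed
    then have "Sup X \<le> snd p / fst p" using X by (intro cSup_least) auto
    then show ?thesis using False by (simp add: le_divide_eq mult.commute)
  qed
qed

lemma ev_single:
  assumes "finite V" "z \<in> V" "\<forall>v\<in>V-{z}. c v = 0"
  shows "ev V c y = c z * y z"
proof -
  have "ev V c y = c z * y z + (\<Sum>v\<in>V-{z}. c v * y v)"
    unfolding ev_def using assms by (simp add: sum.remove)
  also have "(\<Sum>v\<in>V-{z}. c v * y v) = 0" using assms(3) by simp
  finally show ?thesis by simp
qed

lemma proj1:
  assumes V: "finite V" "z \<in> V" and f: "finite cs"
  shows "\<exists>S. finite S \<and> (ratc cs \<longrightarrow> (\<forall>p\<in>S. fst p \<in> \<rat> \<and> snd p \<in> \<rat>)) \<and>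
     (\<forall>t. sat1 S t \<longleftrightarrow> (\<exists>y. y z = t \<and> lsat V cs y))"
proof -
  obtain cs' where cs': "finite cs'" "ratc cs \<longrightarrow> ratc cs'" "\<forall>p\<in>cs'. \<forall>w\<in>V-{z}. fst p w = 0"
     "\<forall>x. lsat V cs' x \<longleftrightarrow> (\<exists>y. (\<forall>v. v \<notin> V-{z} \<longrightarrow> y v = x v) \<and> lsat V cs y)"
    using projection[OF V(1) f, of "V-{z}"] by auto
  define S where "S = (\<lambda>p. (fst p z, snd p)) ` cs'"
  show ?thesis
  proof (intro exI[of _ S] conjI allI)
    show "finite S" using cs' unfolding S_def by auto
    show "ratc cs \<longrightarrow> (\<forall>p\<in>S. fst p \<in> \<rat> \<and> snd p \<in> \<rat>)"
      using cs'(2) unfolding S_def ratc_def by auto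
  next
    fix t
    have "sat1 S t \<longleftrightarrow> lsat V cs' (\<lambda>_. t)"
      unfolding sat1_def lsat_def lsat1_def S_def using ev_single[OF V] cs'(3) by auto
    also have "\<dots> \<longleftrightarrow> (\<exists>y. y z = t \<and> lsat V cs y)"
    proof
      assume "lsat V cs' (\<lambda>_. t)"
      then show "\<exists>y. y z = t \<and> lsat V cs y" using cs'(4) by auto
    next
      assume "\<exists>y. y z = t \<and> lsat V cs y"
      then obtain y where y: "y z = t" "lsat V cs y" by auto
      define y' where "y' = (\<lambda>v. if v \<in> V-{z} then y v else t)"
      have "lsat V cs y'" using y lsat_cong[of V y' y cs] unfolding y'_def by auto
      moreover have "\<forall>v. v \<notin> V-{z} \<longrightarrow> y' v = t" unfolding y'_def by auto
      ultimately show "lsat V cs' (\<lambda>_. t)" using cs'(4) by auto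
    qed
    finally show "sat1 S t \<longleftrightarrow> (\<exists>y. y z = t \<and> lsat V cs y)" .
  qed
qed

lemma ratpoint_aux:
  assumes V: "finite V" and W: "W \<subseteq> V"
  shows "\<forall>cs x. finite cs \<and> ratc cs \<and> (\<forall>p\<in>cs. \<forall>v\<in>V-W. fst p v = 0) \<and> lsat V cs x \<longrightarrow>
      (\<exists>q. (\<forall>v\<in>V. q v \<in> \<rat>) \<and> lsat V cs q)"
proof -
  have "finite W" using W V finite_subset by blast
  then show ?thesis using W
  proof (induction W rule: finite_induct)
    case empty
    show ?case
    proof (intro allI impI)
      fix cs x assume h: "finite cs \<and> ratc cs \<and> (\<forall>p\<in>cs. \<forall>v\<in>V-{}. fst p v = 0) \<and> lsat V cs x"
      have "ev V (fst p) y = 0" if "p \<in> cs" for p y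
        using h that unfolding ev_def by auto
      then have "lsat V cs (\<lambda>_. 0)" using h unfolding lsat_def lsat1_def by auto
      then show "\<exists>q. (\<forall>v\<in>V. q v \<in> \<rat>) \<and> lsat V cs q" by (intro exI[of _ "\<lambda>_. 0"]) auto
    qed
  next
    case (insert w W)
    have wV: "w \<in> V" using insert by auto
    show ?case
    proof (intro allI impI)
      fix cs x assume h: "finite cs \<and> ratc cs \<and> (\<forall>p\<in>cs. \<forall>v\<in>V-insert w W. fst p v = 0) \<and> lsat V cs x"
      define cs' where "cs' = fm w cs"
      have c1: "finite cs'" "ratc cs'" using h fm_finite fm_rat unfolding cs'_def by auto
      have c2: "\<forall>p\<in>cs'. \<forall>v\<in>V-W. fst p v = 0"
      proof (intro ballI)
        fix p v assume p: "p \<in> cs'" and v: "v \<in> V - W"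
        show "fst p v = 0"
        proof (cases "v = w")
          case True then show ?thesis using fm_zero[of p w cs] p unfolding cs'_def by simp
        next
          case False
          then have "\<forall>p\<in>cs. fst p v = 0" using h v by auto
          then show ?thesis using fm_keep[of cs v p w] p unfolding cs'_def by simp
        qed
      qed
      have "lsat V cs x" using h by blast
      then have "lsat V cs (x(w:= x w))" by simp
      then have "lsat V cs' x" unfolding cs'_def using fm_correct[OF V wV, of cs x] h
        by blast
      moreover have "W \<subseteq> V" using insert.prems by auto
      ultimately obtain q' where q': "\<forall>v\<in>V. q' v \<in> \<rat>" "lsat V cs' q'"
        using insert.IH[OF \<open>W \<subseteq> V\<close>, rule_format, of cs' x] c1 c2 by blast
      then obtain t0 where t0: "lsat V cs (q'(w:=t0))"
        using fm_correct[OF V wV, of cs q'] h unfolding cs'_def by auto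
      define S where "S = (\<lambda>p. (fst p w, snd p - ev V (fst p) q' + fst p w * q' w)) ` cs"
      have sat_iff: "sat1 S t \<longleftrightarrow> lsat V cs (q'(w:=t))" for t
      proof -
        have "fst p w * t \<le> snd p - ev V (fst p) q' + fst p w * q' w \<longleftrightarrow> lsat1 V p (q'(w:=t))" for p
          unfolding lsat1_def ev_upd[OF V wV] by (simp add: algebra_simps)
        then show ?thesis unfolding sat1_def S_def lsat_def by auto
      qed
      have fS: "finite S" using h unfolding S_def by auto
      have rS: "\<forall>p\<in>S. fst p \<in> \<rat> \<and> snd p \<in> \<rat>"
      proof
        fix p assume "p \<in> S"
        then obtain c where c: "c \<in> cs" "p = (fst c w, snd c - ev V (fst c) q' + fst c w * q' w)"
          unfolding S_def by auto
        have r: "snd c \<in> \<rat>" "\<And>v. fst c v \<in> \<rat>" using h c unfolding ratc_def by auto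
        have "ev V (fst c) q' \<in> \<rat>" unfolding ev_def using r q' by (intro Rats_sum) auto
        then show "fst p \<in> \<rat> \<and> snd p \<in> \<rat>" using c r q' wV by auto
      qed
      have "sat1 S t0" using sat_iff[of t0] t0 by simp
      then obtain t where t: "t \<in> \<rat>" "sat1 S t" using sat1_rat[OF fS rS] by blast
      have "lsat V cs (q'(w:=t))" using sat_iff[of t] t(2) by simp
      moreover have "\<forall>v\<in>V. (q'(w:=t)) v \<in> \<rat>" using t(1) q'(1) by simp
      ultimately show "\<exists>q. (\<forall>v\<in>V. q v \<in> \<rat>) \<and> lsat V cs q" by blast
    qed
  qed
qed

lemma ratpoint:
  assumes "finite V" "finite cs" "ratc cs" "lsat V cs x"
  shows "\<exists>q. (\<forall>v\<in>V. q v \<in> \<rat>) \<and> lsat V cs q"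
  using ratpoint_aux[OF assms(1), of V] assms by auto

lemma ratmin:
  assumes V: "finite V" "z \<in> V" and f: "finite cs" and r: "ratc cs" and x: "lsat V cs x"
    and lb: "\<forall>y. lsat V cs y \<longrightarrow> lb \<le> y z"
  shows "\<exists>q. (\<forall>v\<in>V. q v \<in> \<rat>) \<and> lsat V cs q \<and> (\<forall>y. lsat V cs y \<longrightarrow> q z \<le> y z)"
proof -
  obtain S where S: "finite S" "\<forall>p\<in>S. fst p \<in> \<rat> \<and> snd p \<in> \<rat>"
    and S3: "\<And>t. sat1 S t \<longleftrightarrow> (\<exists>y. y z = t \<and> lsat V cs y)"
    using proj1[OF V f] r by blast
  have "sat1 S (x z)" using S3[of "x z"] x by blast
  moreover have "\<forall>t. sat1 S t \<longrightarrow> lb \<le> t"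
  proof (intro allI impI)
    fix t assume "sat1 S t"
    then obtain y where "y z = t" "lsat V cs y" using S3 by blast
    then show "lb \<le> t" using lb by blast
  qed
  ultimately obtain a where a: "a \<in> \<rat>" "sat1 S a" "\<forall>t. sat1 S t \<longrightarrow> a \<le> t"
    using sat1_min[OF S(1,2)] by blast
  obtain y0 where y0: "y0 z = a" "lsat V cs y0" using S3[of a] a(2) by blast
  define cs2 where "cs2 = insert ((\<lambda>v. if v = z then 1 else 0), a) cs"
  have e: "ev V (\<lambda>v. if v = z then 1 else 0) y = y z" for y
    using ev_single[OF V, of "\<lambda>v. if v = z then 1 else 0" y] by simp
  have "lsat V cs2 y0" using y0 e unfolding cs2_def lsat_def lsat1_def by simp
  moreover have "ratc cs2" using r a unfolding cs2_def ratc_def by simp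
  moreover have "finite cs2" using f unfolding cs2_def by simp
  ultimately obtain q where q: "\<forall>v\<in>V. q v \<in> \<rat>" "lsat V cs2 q" using ratpoint[OF V(1)] by blast
  have qcs: "lsat V cs q" using q unfolding cs2_def lsat_def by simp
  have "q z \<le> a" using q(2) e unfolding cs2_def lsat_def lsat1_def by simp
  moreover have "a \<le> y z" if "lsat V cs y" for y using a(3) S3[of "y z"] that by blast
  ultimately show ?thesis using q qcs by (meson order_trans)
qed

definition runr :: "'c etp \<Rightarrow> real \<Rightarrow> real \<Rightarrow> real \<Rightarrow> real \<Rightarrow> bool" where
  "runr C Lr Ur w0 w1 \<longleftrightarrow>
     (\<exists>(d :: nat \<Rightarrow> real) (v :: nat \<Rightarrow> 'c \<Rightarrow> real) (e :: nat \<Rightarrow> real).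
        v 0 = zero_val \<and> e 0 = w0 \<and> v (len C) = zero_val \<and> e (len C) = w1 \<and>
        (\<forall>i < len C.
           0 \<le> d i \<and>
           (\<forall>t. 0 \<le> t \<and> t \<le> d i \<longrightarrow>
                 sat (inv C i) (\<lambda>x. v i x + t) \<and>
                 Lr \<le> e i + t * real_of_rat (rate C i) \<and>
                 e i + t * real_of_rat (rate C i) \<le> Ur) \<and>
           sat (guard C i) (\<lambda>x. v i x + d i) \<and>
           v (Suc i) = (\<lambda>x. if x \<in> reset C i then 0 else v i x + d i) \<and>
           e (Suc i) = e i + d i * real_of_rat (rate C i) + real_of_rat (upd C i)) \<and>
        sat (inv C (len C)) zero_val \<and>
        Lr \<le> w1 \<and> w1 \<le> Ur)"

lemma R_runr: "R C L w0 w1 U \<longleftrightarrow> runr C (of_rat L) (of_rat U) w0 w1"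
  unfolding R_def etp_run_def runr_def by simp

fun vl :: "'c etp \<Rightarrow> (nat \<Rightarrow> real) \<Rightarrow> nat \<Rightarrow> 'c \<Rightarrow> real" where
  "vl C d 0 = (\<lambda>x. 0)"
| "vl C d (Suc i) = (\<lambda>x. if x \<in> reset C i then 0 else vl C d i x + d i)"

definition el :: "'c etp \<Rightarrow> real \<Rightarrow> (nat \<Rightarrow> real) \<Rightarrow> nat \<Rightarrow> real" where
  "el C w0 d i = w0 + (\<Sum>j<i. d j * real_of_rat (rate C j) + real_of_rat (upd C j))"

definition lin_run :: "'c etp \<Rightarrow> real \<Rightarrow> real \<Rightarrow> real \<Rightarrow> real \<Rightarrow> (nat \<Rightarrow> real) \<Rightarrow> bool" where
  "lin_run C Lr Ur w0 w1 d \<longleftrightarrow>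
     (\<forall>i<len C. 0 \<le> d i \<and> sat (inv C i) (\<lambda>x. vl C d i x) \<and> sat (inv C i) (\<lambda>x. vl C d i x + d i)
        \<and> Lr \<le> el C w0 d i \<and> el C w0 d i \<le> Ur
        \<and> Lr \<le> el C w0 d i + d i * real_of_rat (rate C i)
        \<and> el C w0 d i + d i * real_of_rat (rate C i) \<le> Ur
        \<and> sat (guard C i) (\<lambda>x. vl C d i x + d i))
     \<and> (\<forall>x. vl C d (len C) x = 0) \<and> sat (inv C (len C)) (\<lambda>x. 0)
     \<and> w1 = el C w0 d (len C) \<and> Lr \<le> w1 \<and> w1 \<le> Ur"

lemma sat_mid:
  assumes "sat g v0" "sat g (\<lambda>x. v0 x + d)" "0 \<le> t" "t \<le> d"
  shows "sat g (\<lambda>x. v0 x + t)"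
  unfolding sat_def
proof
  fix a assume a: "a \<in> set g"
  show "sat_atom a (\<lambda>x. v0 x + t)"
  proof (cases a)
    case (CLe x k)
    then have "v0 x + d \<le> real k" using assms(2) a unfolding sat_def by fastforce
    then show ?thesis using CLe assms by simp
  next
    case (CGe x k)
    then have "real k \<le> v0 x" using assms(1) a unfolding sat_def by fastforce
    then show ?thesis using CGe assms by simp
  qed
qed

lemma en_mid:
  fixes e r d t :: real
  assumes "0 \<le> t" "t \<le> d"
  shows "min 0 (d * r) \<le> t * r \<and> t * r \<le> max 0 (d * r)"
proof (cases "r \<ge> 0")
  case True
  then have "0 \<le> t * r" "t * r \<le> d * r" using assms by (auto intro: mult_right_mono)
  then show ?thesis by auto
next
  case False
  then have "t * r \<le> 0" "d * r \<le> t * r" using assms by (auto intro: mult_right_mono_neg mult_nonneg_nonpos)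
  then show ?thesis by auto
qed

lemma runr_lin: "runr C Lr Ur w0 w1 \<longleftrightarrow> (\<exists>d. lin_run C Lr Ur w0 w1 d)"
proof
  assume "runr C Lr Ur w0 w1"
  then obtain d v e where H: "v 0 = zero_val" "e 0 = w0" "v (len C) = zero_val" "e (len C) = w1"
    and I: "\<forall>i < len C.
           0 \<le> d i \<and>
           (\<forall>t. 0 \<le> t \<and> t \<le> d i \<longrightarrow>
                 sat (inv C i) (\<lambda>x. v i x + t) \<and>
                 Lr \<le> e i + t * real_of_rat (rate C i) \<and>
                 e i + t * real_of_rat (rate C i) \<le> Ur) \<and>
           sat (guard C i) (\<lambda>x. v i x + d i) \<and>
           v (Suc i) = (\<lambda>x. if x \<in> reset C i then 0 else v i x + d i) \<and>
           e (Suc i) = e i + d i * real_of_rat (rate C i) + real_of_rat (upd C i)"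
    and F: "sat (inv C (len C)) zero_val" "Lr \<le> w1" "w1 \<le> Ur"
    unfolding runr_def by blast
  have veq: "i \<le> len C \<Longrightarrow> v i = vl C d i" for i
  proof (induction i)
    case 0 then show ?case using H by (simp add: zero_val_def)
  next
    case (Suc i) then show ?case using I by auto
  qed
  have eeq: "i \<le> len C \<Longrightarrow> e i = el C w0 d i" for i
  proof (induction i)
    case 0 then show ?case using H by (simp add: el_def)
  next
    case (Suc i) then show ?case using I by (auto simp: el_def)
  qed
  have "lin_run C Lr Ur w0 w1 d"
    unfolding lin_run_def
  proof (intro conjI allI impI)
    fix i assume i: "i < len C"
    have vi: "v i = vl C d i" and ei: "e i = el C w0 d i" using veq eeq i by auto
    have A: "sat (inv C i) (\<lambda>x. v i x + t) \<and> Lr \<le> e i + t * real_of_rat (rate C i) \<and>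
                 e i + t * real_of_rat (rate C i) \<le> Ur" if "0 \<le> t" "t \<le> d i" for t
      using I i that by blast
    have d0: "0 \<le> d i" using I i by blast
    note A0 = A[OF order_refl d0] and A1 = A[OF d0 order_refl]
    show "0 \<le> d i" by (rule d0)
    show "sat (inv C i) (\<lambda>x. vl C d i x)" using A0 vi by simp
    show "sat (inv C i) (\<lambda>x. vl C d i x + d i)" using A1 vi by simp
    show "Lr \<le> el C w0 d i" "el C w0 d i \<le> Ur" using A0 ei by simp_all
    show "Lr \<le> el C w0 d i + d i * real_of_rat (rate C i)"
      "el C w0 d i + d i * real_of_rat (rate C i) \<le> Ur" using A1 ei by simp_all
    have "sat (guard C i) (\<lambda>x. v i x + d i)" using I i by blast
    then show "sat (guard C i) (\<lambda>x. vl C d i x + d i)" using vi by simp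
  next
    fix x
    have "vl C d (len C) = zero_val" using veq[of "len C"] H(3) by simp
    then show "vl C d (len C) x = 0" by (simp add: zero_val_def)
  next
    show "sat (inv C (len C)) (\<lambda>x. 0)" using F by (simp add: zero_val_def)
    show "w1 = el C w0 d (len C)" using eeq[of "len C"] H by simp
    show "Lr \<le> w1" "w1 \<le> Ur" using F by auto
  qed
  then show "\<exists>d. lin_run C Lr Ur w0 w1 d" by blast
next
  assume "\<exists>d. lin_run C Lr Ur w0 w1 d"
  then obtain d where H: "lin_run C Lr Ur w0 w1 d" by blast
  have B: "\<forall>i < len C.
           0 \<le> d i \<and>
           (\<forall>t. 0 \<le> t \<and> t \<le> d i \<longrightarrow>
                 sat (inv C i) (\<lambda>x. vl C d i x + t) \<and>
                 Lr \<le> el C w0 d i + t * real_of_rat (rate C i) \<and>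
                 el C w0 d i + t * real_of_rat (rate C i) \<le> Ur) \<and>
           sat (guard C i) (\<lambda>x. vl C d i x + d i) \<and>
           vl C d (Suc i) = (\<lambda>x. if x \<in> reset C i then 0 else vl C d i x + d i) \<and>
           el C w0 d (Suc i) = el C w0 d i + d i * real_of_rat (rate C i) + real_of_rat (upd C i)"
  proof (intro allI impI conjI)
    fix i assume i: "i < len C"
    have h: "0 \<le> d i \<and> sat (inv C i) (\<lambda>x. vl C d i x) \<and> sat (inv C i) (\<lambda>x. vl C d i x + d i)
        \<and> Lr \<le> el C w0 d i \<and> el C w0 d i \<le> Ur
        \<and> Lr \<le> el C w0 d i + d i * real_of_rat (rate C i)
        \<and> el C w0 d i + d i * real_of_rat (rate C i) \<le> Ur
        \<and> sat (guard C i) (\<lambda>x. vl C d i x + d i)" using H i unfolding lin_run_def by blast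
    show "0 \<le> d i" using h by blast
    show "sat (guard C i) (\<lambda>x. vl C d i x + d i)" using h by blast
    show "vl C d (Suc i) = (\<lambda>x. if x \<in> reset C i then 0 else vl C d i x + d i)" by simp
    show "el C w0 d (Suc i) = el C w0 d i + d i * real_of_rat (rate C i) + real_of_rat (upd C i)"
      by (simp add: el_def)
    fix t assume t: "0 \<le> t \<and> t \<le> d i"
    show "sat (inv C i) (\<lambda>x. vl C d i x + t)" using sat_mid[of "inv C i" "vl C d i" "d i" t] h t by simp
    have m: "min 0 (d i * real_of_rat (rate C i)) \<le> t * real_of_rat (rate C i) \<and>
             t * real_of_rat (rate C i) \<le> max 0 (d i * real_of_rat (rate C i))"
      using en_mid t by blast
    show "Lr \<le> el C w0 d i + t * real_of_rat (rate C i)" using m h by linarith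
    show "el C w0 d i + t * real_of_rat (rate C i) \<le> Ur" using m h by linarith
  qed
  have Z: "vl C d 0 = zero_val" "el C w0 d 0 = w0" by (simp_all add: zero_val_def el_def)
  have Z2: "vl C d (len C) = zero_val" using H unfolding lin_run_def by (auto simp: zero_val_def)
  have Z3: "el C w0 d (len C) = w1" "sat (inv C (len C)) zero_val" "Lr \<le> w1" "w1 \<le> Ur"
    using H unfolding lin_run_def by (auto simp: zero_val_def)
  show "runr C Lr Ur w0 w1"
    unfolding runr_def
    apply (rule exI[of _ d], rule exI[of _ "vl C d"], rule exI[of _ "el C w0 d"])
    using B Z Z2 Z3 by blast
qed

lemma runr_shift:
  assumes "runr C Lr Ur w0 w1" "0 \<le> s" "Ur + s \<le> U2"
  shows "runr C Lr U2 (w0 + s) (w1 + s)"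
proof -
  obtain d where d: "lin_run C Lr Ur w0 w1 d" using assms runr_lin by blast
  have e: "el C (w0 + s) d i = el C w0 d i + s" for i by (simp add: el_def)
  have "lin_run C Lr U2 (w0 + s) (w1 + s) d"
    using d assms(2,3) unfolding lin_run_def e by (auto; smt (verit))
  then show ?thesis using runr_lin by blast
qed

lemma runr_bounds: "is_cycle C \<Longrightarrow> runr C Lr Ur w0 w1 \<Longrightarrow> Lr \<le> w0 \<and> w0 \<le> Ur \<and> Lr \<le> w1 \<and> w1 \<le> Ur"
proof -
  assume c: "is_cycle C" and r: "runr C Lr Ur w0 w1"
  obtain d where d: "lin_run C Lr Ur w0 w1 d" using r runr_lin by blast
  have "0 < len C" using c unfolding is_cycle_def by simp
  then have "Lr \<le> el C w0 d 0 \<and> el C w0 d 0 \<le> Ur" using d unfolding lin_run_def by blast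
  then show ?thesis using d unfolding lin_run_def by (simp add: el_def)
qed

datatype var = VA | VB | VU | VS1 | VS2 | VD1 nat | VD2 nat

type_synonym aff = "(var \<Rightarrow> real) \<times> real"

definition av :: "var set \<Rightarrow> aff \<Rightarrow> (var \<Rightarrow> real) \<Rightarrow> real" where
  "av V a y = ev V (fst a) y + snd a"

definition dl :: "var \<Rightarrow> aff" where "dl u = (\<lambda>v. if v = u then 1 else 0, 0)"
definition cst :: "real \<Rightarrow> aff" where "cst k = (\<lambda>_. 0, k)"
definition addA :: "aff \<Rightarrow> aff \<Rightarrow> aff" where "addA a b = (\<lambda>v. fst a v + fst b v, snd a + snd b)"
definition scA :: "real \<Rightarrow> aff \<Rightarrow> aff" where "scA s a = (\<lambda>v. s * fst a v, s * snd a)"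
definition sumA :: "nat set \<Rightarrow> (nat \<Rightarrow> aff) \<Rightarrow> aff" where
  "sumA I f = (\<lambda>v. \<Sum>i\<in>I. fst (f i) v, \<Sum>i\<in>I. snd (f i))"
definition lec :: "aff \<Rightarrow> aff \<Rightarrow> var lc" where
  "lec a b = (\<lambda>v. fst a v - fst b v, snd b - snd a)"

lemma av_dl: "finite V \<Longrightarrow> u \<in> V \<Longrightarrow> av V (dl u) y = y u"
proof -
  assume "finite V" "u \<in> V"
  have "(\<Sum>v\<in>V. (if v = u then 1 else 0) * y v) = (\<Sum>v\<in>V. if v = u then y v else 0)"
    by (rule sum.cong) auto
  then show ?thesis unfolding av_def dl_def ev_def using \<open>finite V\<close> \<open>u \<in> V\<close> by simp
qed

lemma av_cst: "av V (cst k) y = k"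
  unfolding av_def cst_def ev_def by simp

lemma av_add: "av V (addA a b) y = av V a y + av V b y"
  unfolding av_def addA_def ev_def by (simp add: sum.distrib algebra_simps)

lemma av_sc: "av V (scA s a) y = s * av V a y"
  unfolding av_def scA_def ev_def by (simp add: sum_distrib_left algebra_simps)

lemma av_sum: "av V (sumA I f) y = (\<Sum>i\<in>I. av V (f i) y)"
  unfolding av_def sumA_def ev_def
  by (simp add: sum.distrib sum_distrib_right sum.swap[of _ V I])

lemma lsat1_lec: "lsat1 V (lec a b) y \<longleftrightarrow> av V a y \<le> av V b y"
  unfolding lsat1_def lec_def av_def ev_def by (simp add: left_diff_distrib sum_subtractf) arith

definition ratA :: "aff \<Rightarrow> bool" where "ratA a \<longleftrightarrow> snd a \<in> \<rat> \<and> (\<forall>v. fst a v \<in> \<rat>)"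

lemma ratA_dl: "ratA (dl u)" unfolding ratA_def dl_def by auto
lemma ratA_cst: "k \<in> \<rat> \<Longrightarrow> ratA (cst k)" unfolding ratA_def cst_def by auto
lemma ratA_add: "ratA a \<Longrightarrow> ratA b \<Longrightarrow> ratA (addA a b)" unfolding ratA_def addA_def by auto
lemma ratA_sc: "s \<in> \<rat> \<Longrightarrow> ratA a \<Longrightarrow> ratA (scA s a)" unfolding ratA_def scA_def by auto
lemma ratA_sum: "(\<And>i. i \<in> I \<Longrightarrow> ratA (f i)) \<Longrightarrow> ratA (sumA I f)"
  unfolding ratA_def sumA_def by (auto intro!: Rats_sum)
lemma ratc_lec: "ratA a \<Longrightarrow> ratA b \<Longrightarrow> snd (lec a b) \<in> \<rat> \<and> (\<forall>v. fst (lec a b) v \<in> \<rat>)"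
  unfolding ratA_def lec_def by auto

definition ratp :: "var lc \<Rightarrow> bool" where "ratp p \<longleftrightarrow> snd p \<in> \<rat> \<and> (\<forall>v. fst p v \<in> \<rat>)"
lemma ratp_lec: "ratA a \<Longrightarrow> ratA b \<Longrightarrow> ratp (lec a b)"
  unfolding ratp_def using ratc_lec by blast

definition vco :: "'c etp \<Rightarrow> nat \<Rightarrow> 'c \<Rightarrow> nat \<Rightarrow> real" where
  "vco C i x j = (if (\<forall>l. j \<le> l \<and> l < i \<longrightarrow> x \<notin> reset C l) then 1 else 0)"

lemma vl_sum: "vl C d i x = (\<Sum>j<i. vco C i x j * d j)"
proof (induction i)
  case 0 then show ?case by simp
next
  case (Suc i)
  show ?case
  proof (cases "x \<in> reset C i")
    case True
    have "vco C (Suc i) x j = 0" if "j < Suc i" for j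
    proof -
      have "\<not>(\<forall>l. j \<le> l \<and> l < Suc i \<longrightarrow> x \<notin> reset C l)" using True that
        by (metis lessI less_Suc_eq_le)
      then show ?thesis unfolding vco_def by simp
    qed
    then show ?thesis using True by simp
  next
    case False
    have "vco C (Suc i) x j = vco C i x j" if "j < i" for j
      using that False unfolding vco_def by (auto simp: less_Suc_eq)
    moreover have "vco C (Suc i) x i = 1" using False unfolding vco_def by (auto simp: less_Suc_eq)
    ultimately show ?thesis using False Suc by simp
  qed
qed

definition VXe :: "'c etp \<Rightarrow> (nat \<Rightarrow> var) \<Rightarrow> nat \<Rightarrow> 'c \<Rightarrow> aff" where
  "VXe C dv i x = sumA {..<i} (\<lambda>j. scA (vco C i x j) (dl (dv j)))"

definition VXd :: "'c etp \<Rightarrow> (nat \<Rightarrow> var) \<Rightarrow> nat \<Rightarrow> 'c \<Rightarrow> aff" where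
  "VXd C dv i x = addA (VXe C dv i x) (dl (dv i))"

definition EXe :: "'c etp \<Rightarrow> var \<Rightarrow> (nat \<Rightarrow> var) \<Rightarrow> nat \<Rightarrow> aff" where
  "EXe C w0v dv i = addA (dl w0v) (sumA {..<i} (\<lambda>j. addA (scA (of_rat (rate C j)) (dl (dv j))) (cst (of_rat (upd C j)))))"

definition EXd :: "'c etp \<Rightarrow> var \<Rightarrow> (nat \<Rightarrow> var) \<Rightarrow> nat \<Rightarrow> aff" where
  "EXd C w0v dv i = addA (EXe C w0v dv i) (scA (of_rat (rate C i)) (dl (dv i)))"

fun acon :: "'c atom \<Rightarrow> ('c \<Rightarrow> aff) \<Rightarrow> var lc" where
  "acon (CLe x k) X = lec (X x) (cst (real k))"
| "acon (CGe x k) X = lec (cst (real k)) (X x)"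

lemma ball_acon: "(\<forall>a\<in>set g. lsat1 V (acon a X) y) \<longleftrightarrow> sat g (\<lambda>x. av V (X x) y)"
proof -
  have "lsat1 V (acon a X) y \<longleftrightarrow> sat_atom a (\<lambda>x. av V (X x) y)" for a
    by (cases a) (auto simp: lsat1_lec av_cst)
  then show ?thesis unfolding sat_def by auto
qed

lemma ratA_acon: "(\<And>x. ratA (X x)) \<Longrightarrow> snd (acon a X) \<in> \<rat> \<and> (\<forall>v. fst (acon a X) v \<in> \<rat>)"
  by (cases a) (auto intro!: ratc_lec ratA_cst)

lemma ratA_VXe: "ratA (VXe C dv i x)"
  unfolding VXe_def vco_def by (auto intro!: ratA_sum ratA_sc ratA_dl)
lemma ratA_VXd: "ratA (VXd C dv i x)"
  unfolding VXd_def by (auto intro!: ratA_add ratA_VXe ratA_dl)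
lemma ratA_EXe: "ratA (EXe C w0v dv i)"
  unfolding EXe_def by (auto intro!: ratA_sum ratA_sc ratA_dl ratA_add ratA_cst)
lemma ratA_EXd: "ratA (EXd C w0v dv i)"
  unfolding EXd_def by (auto intro!: ratA_sc ratA_dl ratA_add ratA_EXe)

definition csR :: "'c::finite etp \<Rightarrow> real \<Rightarrow> var \<Rightarrow> var \<Rightarrow> (nat \<Rightarrow> var) \<Rightarrow> var lc set" where
  "csR C Lr w0v w1v dv =
    (\<Union>i\<in>{..<len C}.
       {lec (cst 0) (dl (dv i)), lec (cst Lr) (EXe C w0v dv i), lec (EXe C w0v dv i) (dl VU),
        lec (cst Lr) (EXd C w0v dv i), lec (EXd C w0v dv i) (dl VU)}
       \<union> (\<lambda>a. acon a (VXe C dv i)) ` set (inv C i)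
       \<union> (\<lambda>a. acon a (VXd C dv i)) ` set (inv C i)
       \<union> (\<lambda>a. acon a (VXd C dv i)) ` set (guard C i))
    \<union> (\<Union>x\<in>UNIV. {lec (VXe C dv (len C) x) (cst 0), lec (cst 0) (VXe C dv (len C) x)})
    \<union> (\<lambda>a. acon a (\<lambda>x. cst 0)) ` set (inv C (len C))
    \<union> {lec (dl w1v) (EXe C w0v dv (len C)), lec (EXe C w0v dv (len C)) (dl w1v),
       lec (cst Lr) (dl w1v), lec (dl w1v) (dl VU)}"

lemma csR_finite: "finite (csR C Lr w0v w1v dv)"
  unfolding csR_def by auto

lemma ratp_acon: "(\<And>x. ratA (X x)) \<Longrightarrow> ratp (acon a X)"
  unfolding ratp_def using ratA_acon by blast

lemma csR_rat: "Lr \<in> \<rat> \<Longrightarrow> ratc (csR C Lr w0v w1v dv)"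
proof -
  assume L: "Lr \<in> \<rat>"
  have "\<forall>p\<in>csR C Lr w0v w1v dv. ratp p"
    unfolding csR_def using L
    by (auto simp add: ratp_lec ratp_acon ratA_cst ratA_dl ratA_EXe ratA_EXd ratA_VXe ratA_VXd)
  then show ?thesis unfolding ratc_def ratp_def by blast
qed

lemma av_VXe:
  assumes "finite V" "i \<le> len C" "\<forall>j<len C. dv j \<in> V"
  shows "av V (VXe C dv i x) y = vl C (\<lambda>j. y (dv j)) i x"
proof -
  have "av V (VXe C dv i x) y = (\<Sum>j<i. vco C i x j * y (dv j))"
    unfolding VXe_def av_sum av_sc using assms by (intro sum.cong) (auto simp: av_dl)
  then show ?thesis by (simp add: vl_sum)
qed

lemma av_VXd:
  assumes "finite V" "i < len C" "\<forall>j<len C. dv j \<in> V"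
  shows "av V (VXd C dv i x) y = vl C (\<lambda>j. y (dv j)) i x + y (dv i)"
  unfolding VXd_def av_add using assms av_VXe[of V i C dv x y] by (simp add: av_dl)

lemma av_EXe:
  assumes "finite V" "i \<le> len C" "\<forall>j<len C. dv j \<in> V" "w0v \<in> V"
  shows "av V (EXe C w0v dv i) y = el C (y w0v) (\<lambda>j. y (dv j)) i"
proof -
  have "av V (EXe C w0v dv i) y = y w0v + (\<Sum>j<i. y (dv j) * real_of_rat (rate C j) + real_of_rat (upd C j))"
    unfolding EXe_def av_add av_sum using assms
    by (auto simp: av_dl av_sc av_cst av_add mult.commute intro!: sum.cong)
  then show ?thesis by (simp add: el_def)
qed

lemma av_EXd:
  assumes "finite V" "i < len C" "\<forall>j<len C. dv j \<in> V" "w0v \<in> V"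
  shows "av V (EXd C w0v dv i) y = el C (y w0v) (\<lambda>j. y (dv j)) i + y (dv i) * real_of_rat (rate C i)"
  unfolding EXd_def av_add av_sc using assms av_EXe[of V i C dv w0v y] by (simp add: av_dl mult.commute)

lemma csR_iff:
  assumes V: "finite V" "w0v \<in> V" "w1v \<in> V" "VU \<in> V" "\<forall>i<len C. dv i \<in> V"
  shows "lsat V (csR C Lr w0v w1v dv) y \<longleftrightarrow> lin_run C Lr (y VU) (y w0v) (y w1v) (\<lambda>i. y (dv i))"
  unfolding lsat_def csR_def lin_run_def
  using V apply (simp add: ball_Un ball_UN lsat1_lec ball_acon av_VXe av_VXd av_EXe av_EXd av_dl av_cst)
  apply (simp only: lessThan_iff order.eq_iff[of "y w1v"] order.eq_iff[of "vl C _ (len C) _" 0])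
  by blast

definition V0 :: "'c etp \<Rightarrow> var set" where
  "V0 C = {VA,VB,VU,VS1,VS2} \<union> VD1 ` {..<len C} \<union> VD2 ` {..<len C}"

lemma V0_facts: "finite (V0 C)" "VA \<in> V0 C" "VB \<in> V0 C" "VU \<in> V0 C" "VS1 \<in> V0 C" "VS2 \<in> V0 C"
  "\<forall>i<len C. VD1 i \<in> V0 C" "\<forall>i<len C. VD2 i \<in> V0 C"
  unfolding V0_def by auto

lemma lsat_Un: "lsat V (A \<union> B) y \<longleftrightarrow> lsat V A y \<and> lsat V B y"
  unfolding lsat_def by blast

lemma lsat_ins: "lsat V (insert p A) y \<longleftrightarrow> lsat1 V p y \<and> lsat V A y"
  unfolding lsat_def by blast

lemma lsat_empty: "lsat V {} y"
  unfolding lsat_def by blast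

lemma runr_y1:
  fixes C :: "'c::finite etp"
  shows "runr C Lr Ur w0 w1 \<longleftrightarrow> (\<exists>y. y VA = w0 \<and> y VS1 = w1 \<and> y VU = Ur \<and> lsat (V0 C) (csR C Lr VA VS1 VD1) y)"
proof
  assume "runr C Lr Ur w0 w1"
  then obtain d where d: "lin_run C Lr Ur w0 w1 d" using runr_lin by blast
  define y where "y = (\<lambda>v. case v of VA \<Rightarrow> w0 | VS1 \<Rightarrow> w1 | VU \<Rightarrow> Ur | VD1 i \<Rightarrow> d i | _ \<Rightarrow> 0)"
  have "(\<lambda>i. y (VD1 i)) = d" unfolding y_def by auto
  then have "lsat (V0 C) (csR C Lr VA VS1 VD1) y"
    using csR_iff[where C=C and Lr=Lr and y=y, OF V0_facts(1,2,5,4,7)[of C]] d unfolding y_def by simp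
  then show "\<exists>y. y VA = w0 \<and> y VS1 = w1 \<and> y VU = Ur \<and> lsat (V0 C) (csR C Lr VA VS1 VD1) y"
    unfolding y_def by (intro exI[of _ y]) (simp add: y_def)
next
  assume "\<exists>y. y VA = w0 \<and> y VS1 = w1 \<and> y VU = Ur \<and> lsat (V0 C) (csR C Lr VA VS1 VD1) y"
  then obtain y where y: "y VA = w0" "y VS1 = w1" "y VU = Ur" "lsat (V0 C) (csR C Lr VA VS1 VD1) y" by blast
  then have "lin_run C Lr Ur w0 w1 (\<lambda>i. y (VD1 i))"
    using csR_iff[where C=C and Lr=Lr and y=y, OF V0_facts(1,2,5,4,7)[of C]] by simp
  then show "runr C Lr Ur w0 w1" using runr_lin by blast
qed

lemma runr_conv:
  fixes C :: "'c::finite etp"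
  assumes "runr C Lr Ur x1 s1" "runr C Lr Ur x2 s2" "0 \<le> a" "a \<le> 1"
  shows "runr C Lr Ur (a * x1 + (1 - a) * x2) (a * s1 + (1 - a) * s2)"
proof -
  obtain y1 where y1: "y1 VA = x1" "y1 VS1 = s1" "y1 VU = Ur" "lsat (V0 C) (csR C Lr VA VS1 VD1) y1"
    using assms(1) runr_y1 by blast
  obtain y2 where y2: "y2 VA = x2" "y2 VS1 = s2" "y2 VU = Ur" "lsat (V0 C) (csR C Lr VA VS1 VD1) y2"
    using assms(2) runr_y1 by blast
  have "lsat (V0 C) (csR C Lr VA VS1 VD1) (\<lambda>v. a * y1 v + (1 - a) * y2 v)"
    using lsat_convex[OF y1(4) y2(4) assms(3,4)] .
  moreover have "a * y1 VU + (1 - a) * y2 VU = Ur" using y1 y2 by (simp add: algebra_simps)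
  ultimately show ?thesis using y1 y2 runr_y1[of C Lr Ur] by auto
qed

definition Frr :: "'c::finite etp \<Rightarrow> real \<Rightarrow> real \<Rightarrow> real \<Rightarrow> real \<Rightarrow> bool" where
  "Frr C Lr a b Ur \<longleftrightarrow> Lr \<le> a \<and> a \<le> b \<and> b \<le> Ur \<and>
     (\<exists>s. a \<le> s \<and> s \<le> b \<and> runr C Lr Ur a s) \<and> (\<exists>s. a \<le> s \<and> s \<le> b \<and> runr C Lr Ur b s)"

definition Rinfr :: "'c::finite etp \<Rightarrow> real \<Rightarrow> real \<Rightarrow> real \<Rightarrow> real \<Rightarrow> bool" where
  "Rinfr C Lr a b Ur \<longleftrightarrow> Lr \<le> a \<and> a \<le> b \<and> b \<le> Ur \<and>
     (\<forall>w0. a \<le> w0 \<and> w0 \<le> b \<longrightarrow> (\<exists>w1. a \<le> w1 \<and> w1 \<le> b \<and> runr C Lr Ur w0 w1))"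

lemma Rinf_iff: "Rinf C L a b U \<longleftrightarrow> Rinfr C (of_rat L) (of_rat a) (of_rat b) (of_rat U)"
  unfolding Rinf_def Rinfr_def R_runr by (simp add: of_rat_less_eq)

lemma Frr_Rinfr: "Frr C Lr a b Ur \<longleftrightarrow> Rinfr C Lr a b Ur"
proof
  assume "Rinfr C Lr a b Ur" then show "Frr C Lr a b Ur"
    unfolding Rinfr_def Frr_def by auto
next
  assume F: "Frr C Lr a b Ur"
  then obtain sa sb where sa: "a \<le> sa" "sa \<le> b" "runr C Lr Ur a sa"
    and sb: "a \<le> sb" "sb \<le> b" "runr C Lr Ur b sb" and ab: "Lr \<le> a" "a \<le> b" "b \<le> Ur"
    unfolding Frr_def by blast
  have "\<exists>w1. a \<le> w1 \<and> w1 \<le> b \<and> runr C Lr Ur w0 w1" if w0: "a \<le> w0" "w0 \<le> b" for w0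
  proof (cases "a = b")
    case True
    then have "w0 = a" using w0 by simp
    then show ?thesis using sa by blast
  next
    case False
    then have ab': "a < b" using ab by simp
    define l where "l = (b - w0) / (b - a)"
    have l0: "0 \<le> l" "l \<le> 1" using w0 ab' unfolding l_def by (auto simp: divide_le_eq)
    have "l * (b - a) = b - w0" unfolding l_def using ab' by simp
    moreover have "l * a + (1 - l) * b = b - l * (b - a)" by (simp add: algebra_simps)
    ultimately have wl: "l * a + (1 - l) * b = w0" by simp
    define s where "s = l * sa + (1 - l) * sb"
    have "runr C Lr Ur (l * a + (1 - l) * b) s"
      unfolding s_def by (rule runr_conv[OF sa(3) sb(3) l0])
    moreover have "a \<le> s"
    proof -
      have "l * a \<le> l * sa" "(1 - l) * a \<le> (1 - l) * sb" using l0 sa sb by (auto intro: mult_left_mono)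
      moreover have "l * a + (1 - l) * a = a" by (simp add: algebra_simps)
      ultimately show ?thesis unfolding s_def by linarith
    qed
    moreover have "s \<le> b"
    proof -
      have "l * sa \<le> l * b" "(1 - l) * sb \<le> (1 - l) * b" using l0 sa sb by (auto intro: mult_left_mono)
      moreover have "l * b + (1 - l) * b = b" by (simp add: algebra_simps)
      ultimately show ?thesis unfolding s_def by linarith
    qed
    ultimately show ?thesis using wl by auto
  qed
  then show "Rinfr C Lr a b Ur" unfolding Rinfr_def using ab by blast
qed

definition csF :: "'c::finite etp \<Rightarrow> real \<Rightarrow> var lc set" where
  "csF C Lr = csR C Lr VA VS1 VD1 \<union> csR C Lr VB VS2 VD2 \<union>
     {lec (cst Lr) (dl VA), lec (dl VA) (dl VB), lec (dl VB) (dl VU), lec (dl VA) (dl VS1),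
      lec (dl VS1) (dl VB), lec (dl VA) (dl VS2), lec (dl VS2) (dl VB)}"

lemma csF_finite: "finite (csF C Lr)"
  unfolding csF_def using csR_finite by auto

lemma csF_rat: "Lr \<in> \<rat> \<Longrightarrow> ratc (csF C Lr)"
proof -
  assume L: "Lr \<in> \<rat>"
  have "\<forall>p\<in>{lec (cst Lr) (dl VA), lec (dl VA) (dl VB), lec (dl VB) (dl VU), lec (dl VA) (dl VS1),
      lec (dl VS1) (dl VB), lec (dl VA) (dl VS2), lec (dl VS2) (dl VB)}. ratp p"
    using L by (simp add: ratp_lec ratA_cst ratA_dl)
  then show ?thesis using csR_rat[OF L] unfolding csF_def ratc_def ratp_def by blast
qed

lemma F_iff:
  fixes C :: "'c::finite etp"
  shows "Frr C Lr a b Ur \<longleftrightarrow> (\<exists>y. y VA = a \<and> y VB = b \<and> y VU = Ur \<and> lsat (V0 C) (csF C Lr) y)"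
proof
  assume "Frr C Lr a b Ur"
  then obtain s1 s2 where s: "a \<le> s1" "s1 \<le> b" "runr C Lr Ur a s1" "a \<le> s2" "s2 \<le> b" "runr C Lr Ur b s2"
    and ab: "Lr \<le> a" "a \<le> b" "b \<le> Ur"
    unfolding Frr_def by blast
  obtain d1 where d1: "lin_run C Lr Ur a s1 d1" using s(3) runr_lin by blast
  obtain d2 where d2: "lin_run C Lr Ur b s2 d2" using s(6) runr_lin by blast
  define y where "y = (\<lambda>v. case v of VA \<Rightarrow> a | VB \<Rightarrow> b | VU \<Rightarrow> Ur | VS1 \<Rightarrow> s1 | VS2 \<Rightarrow> s2
     | VD1 i \<Rightarrow> d1 i | VD2 i \<Rightarrow> d2 i)"
  have e1: "(\<lambda>i. y (VD1 i)) = d1" "(\<lambda>i. y (VD2 i)) = d2" unfolding y_def by auto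
  have c1: "lsat (V0 C) (csR C Lr VA VS1 VD1) y"
    using csR_iff[where C=C and Lr=Lr and y=y, OF V0_facts(1,2,5,4,7)[of C]] d1 e1 unfolding y_def by simp
  have c2: "lsat (V0 C) (csR C Lr VB VS2 VD2) y"
    using csR_iff[where C=C and Lr=Lr and y=y, OF V0_facts(1,3,6,4,8)[of C]] d2 e1 unfolding y_def by simp
  have c3: "lsat (V0 C) {lec (cst Lr) (dl VA), lec (dl VA) (dl VB), lec (dl VB) (dl VU), lec (dl VA) (dl VS1),
      lec (dl VS1) (dl VB), lec (dl VA) (dl VS2), lec (dl VS2) (dl VB)} y"
    using ab s V0_facts[of C] by (simp add: lsat_ins lsat_empty lsat1_lec av_dl av_cst y_def)
  have "lsat (V0 C) (csF C Lr) y" unfolding csF_def lsat_Un using c1 c2 c3 by blast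
  then show "\<exists>y. y VA = a \<and> y VB = b \<and> y VU = Ur \<and> lsat (V0 C) (csF C Lr) y"
    by (intro exI[of _ y]) (simp add: y_def)
next
  assume "\<exists>y. y VA = a \<and> y VB = b \<and> y VU = Ur \<and> lsat (V0 C) (csF C Lr) y"
  then obtain y where y: "y VA = a" "y VB = b" "y VU = Ur" "lsat (V0 C) (csF C Lr) y" by blast
  then have c1: "lsat (V0 C) (csR C Lr VA VS1 VD1) y" and c2: "lsat (V0 C) (csR C Lr VB VS2 VD2) y"
    and c3: "lsat (V0 C) {lec (cst Lr) (dl VA), lec (dl VA) (dl VB), lec (dl VB) (dl VU), lec (dl VA) (dl VS1),
      lec (dl VS1) (dl VB), lec (dl VA) (dl VS2), lec (dl VS2) (dl VB)} y"
    unfolding csF_def lsat_Un by blast+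
  have r1: "runr C Lr Ur a (y VS1)"
    using csR_iff[where C=C and Lr=Lr and y=y, OF V0_facts(1,2,5,4,7)[of C]] c1 y runr_lin by metis
  have r2: "runr C Lr Ur b (y VS2)"
    using csR_iff[where C=C and Lr=Lr and y=y, OF V0_facts(1,3,6,4,8)[of C]] c2 y runr_lin by metis
  have "Lr \<le> a \<and> a \<le> b \<and> b \<le> Ur \<and> a \<le> y VS1 \<and> y VS1 \<le> b \<and> a \<le> y VS2 \<and> y VS2 \<le> b"
    using c3 y V0_facts[of C] by (simp add: lsat_ins lsat_empty lsat1_lec av_dl av_cst)
  then show "Frr C Lr a b Ur" unfolding Frr_def using r1 r2 by blast
qed


lemma proj_step:
  fixes C :: "'c::finite etp"
  shows "\<exists>S. finite S \<and> (\<forall>t. sat1 S t \<longleftrightarrow> (\<exists>s. a \<le> s \<and> s \<le> b \<and> runr C Lr Ur t s))"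
proof -
  define cs1 where "cs1 = csR C Lr VA VS1 VD1 \<union> {lec (cst a) (dl VS1), lec (dl VS1) (cst b),
     lec (dl VU) (cst Ur), lec (cst Ur) (dl VU)}"
  have fin: "finite cs1" unfolding cs1_def using csR_finite by auto
  obtain S where S: "finite S" "\<forall>t. sat1 S t \<longleftrightarrow> (\<exists>y. y VA = t \<and> lsat (V0 C) cs1 y)"
    using proj1[OF V0_facts(1,2)[of C] fin] by blast
  have "(\<exists>y. y VA = t \<and> lsat (V0 C) cs1 y) \<longleftrightarrow> (\<exists>s. a \<le> s \<and> s \<le> b \<and> runr C Lr Ur t s)" for t
  proof -
    have ex: "lsat (V0 C) {lec (cst a) (dl VS1), lec (dl VS1) (cst b),
     lec (dl VU) (cst Ur), lec (cst Ur) (dl VU)} y \<longleftrightarrow> a \<le> y VS1 \<and> y VS1 \<le> b \<and> y VU = Ur" for y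
      using V0_facts[of C] by (auto simp: lsat_ins lsat_empty lsat1_lec av_dl av_cst)
    show ?thesis unfolding cs1_def lsat_Un ex runr_y1 by blast
  qed
  then show ?thesis using S by auto
qed

theorem main:
  fixes C :: "('c::finite) etp" and L :: rat
  assumes cyc: "is_cycle C"
    and ex: "\<exists>a b U. Rinf C L a b U"
  shows "\<exists>amin :: rat.
           (\<exists>b U. Rinf C L amin b U) \<and>
           (\<forall>a. (\<exists>b U. Rinf C L a b U) \<longrightarrow> amin \<le> a) \<and>
           (\<forall>(w :: real) (U :: rat). w < real_of_rat amin \<longrightarrow> \<not> inf_run C L U w) \<and>
           (\<forall>w :: real. real_of_rat amin \<le> w \<longrightarrow> (\<exists>U :: rat. inf_run C L U w))"
proof -
  define Lr where "Lr = (of_rat L :: real)"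
  have LrQ: "Lr \<in> \<rat>" unfolding Lr_def by simp
  have RF: "Rinf C L a b U \<longleftrightarrow> (\<exists>y. y VA = of_rat a \<and> y VB = of_rat b \<and> y VU = of_rat U \<and> lsat (V0 C) (csF C Lr) y)"
    for a b U unfolding Rinf_iff Frr_Rinfr[symmetric] F_iff Lr_def ..
  obtain a0 b0 U0 where "Rinf C L a0 b0 U0" using ex by blast
  then obtain y0 where y0: "lsat (V0 C) (csF C Lr) y0" using RF by blast
  have lb: "\<forall>y. lsat (V0 C) (csF C Lr) y \<longrightarrow> Lr \<le> y VA"
    using F_iff[of C Lr] unfolding Frr_def by blast
  obtain q where q: "\<forall>v\<in>V0 C. q v \<in> \<rat>" "lsat (V0 C) (csF C Lr) q"
    "\<forall>y. lsat (V0 C) (csF C Lr) y \<longrightarrow> q VA \<le> y VA"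
    using ratmin[OF V0_facts(1,2)[of C] csF_finite csF_rat[OF LrQ] y0 lb] by blast
  obtain amin where amin: "q VA = of_rat amin" using q(1) V0_facts[of C] Rats_cases by metis
  obtain bq where bq: "q VB = of_rat bq" using q(1) V0_facts[of C] Rats_cases by metis
  obtain Uq where Uq: "q VU = of_rat Uq" using q(1) V0_facts[of C] Rats_cases by metis
  have R0: "Rinf C L amin bq Uq" using RF q(2) amin bq Uq by blast
  have minpart: "\<forall>a. (\<exists>b U. Rinf C L a b U) \<longrightarrow> amin \<le> a"
  proof (intro allI impI)
    fix a assume "\<exists>b U. Rinf C L a b U"
    then obtain y where "y VA = of_rat a" "lsat (V0 C) (csF C Lr) y" using RF by blast
    then have "(of_rat amin :: real) \<le> of_rat a" using q(3) amin by metis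
    then show "amin \<le> a" by (simp add: of_rat_less_eq)
  qed
  have part1: "\<forall>(w :: real) (U :: rat). w < real_of_rat amin \<longrightarrow> \<not> inf_run C L U w"
  proof (intro allI impI notI)
    fix w :: real and U :: rat
    assume w: "w < real_of_rat amin" and "inf_run C L U w"
    then obtain ws where ws: "ws 0 = w" "\<forall>k. R C L (ws k) (ws (Suc k)) U" unfolding inf_run_def by blast
    define Ur where "Ur = (of_rat U :: real)"
    have rr: "runr C Lr Ur (ws k) (ws (Suc k))" for k using ws R_runr unfolding Lr_def Ur_def by blast
    have bnd: "Lr \<le> ws k \<and> ws k \<le> Ur" for k using runr_bounds[OF cyc rr[of k]] by blast
    define X where "X = range ws"
    have X: "X \<noteq> {}" "bdd_below X" "bdd_above X" unfolding X_def using bnd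
      by (auto intro!: bdd_belowI[of _ Lr] bdd_aboveI[of _ Ur])
    define a where "a = Inf X"
    define b where "b = Sup X"
    have aX: "a \<le> ws k" "ws k \<le> b" for k unfolding a_def b_def X_def using X unfolding X_def
      by (auto intro: cInf_lower cSup_upper)
    have "Lr \<le> a" unfolding a_def using X bnd unfolding X_def by (auto intro!: cInf_greatest)
    moreover have "b \<le> Ur" unfolding b_def using X bnd unfolding X_def by (auto intro!: cSup_least)
    moreover have "a \<le> b" using aX[of 0] by linarith
    moreover obtain S where S: "finite S" "\<forall>t. sat1 S t \<longleftrightarrow> (\<exists>s. a \<le> s \<and> s \<le> b \<and> runr C Lr Ur t s)"
      using proj_step[of a b C Lr Ur] by blast
    have sX: "\<forall>x\<in>X. sat1 S x"
    proof
      fix x assume "x \<in> X"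
      then obtain k where k: "x = ws k" unfolding X_def by blast
      have "a \<le> ws (Suc k)" "ws (Suc k) \<le> b" using aX by auto
      then show "sat1 S x" using S rr k by blast
    qed
    have "\<exists>s. a \<le> s \<and> s \<le> b \<and> runr C Lr Ur a s" using sat1_Inf[OF X(1,2) sX] S unfolding a_def by blast
    moreover have "\<exists>s. a \<le> s \<and> s \<le> b \<and> runr C Lr Ur b s" using sat1_Sup[OF X(1,3) sX] S unfolding b_def by blast
    ultimately have "Frr C Lr a b Ur" unfolding Frr_def by blast
    then obtain y where "y VA = a" "lsat (V0 C) (csF C Lr) y" using F_iff by blast
    then have "q VA \<le> a" using q(3) by metis
    then show False using aX[of 0] ws(1) w amin by linarith
  qed
  have part2: "\<forall>w :: real. real_of_rat amin \<le> w \<longrightarrow> (\<exists>U :: rat. inf_run C L U w)"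
  proof (intro allI impI)
    fix w :: real assume w: "real_of_rat amin \<le> w"
    define a' where "a' = (of_rat amin :: real)"
    define b' where "b' = (of_rat bq :: real)"
    define U' where "U' = (of_rat Uq :: real)"
    have RI: "Rinfr C Lr a' b' U'" using R0 Rinf_iff unfolding Lr_def a'_def b'_def U'_def by blast
    define f where "f x = (SOME s. a' \<le> s \<and> s \<le> b' \<and> runr C Lr U' x s)" for x
    have fP: "a' \<le> f x \<and> f x \<le> b' \<and> runr C Lr U' x (f x)" if "a' \<le> x" "x \<le> b'" for x
    proof -
      have "\<exists>s. a' \<le> s \<and> s \<le> b' \<and> runr C Lr U' x s" using RI that unfolding Rinfr_def by blast
      then show ?thesis unfolding f_def by (rule someI_ex)
    qed
    define ws where "ws k = (f ^^ k) a'" for k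
    have wsb: "a' \<le> ws k \<and> ws k \<le> b'" for k
    proof (induction k)
      case 0 then show ?case using RI unfolding ws_def Rinfr_def by simp
    next
      case (Suc k) then show ?case using fP unfolding ws_def by simp
    qed
    have wsr: "runr C Lr U' (ws k) (ws (Suc k))" for k
      using fP[of "ws k"] wsb[of k] unfolding ws_def by simp
    define sh where "sh = w - a'"
    define U2 where "U2 = Uq + of_int (ceiling sh)"
    have sh0: "0 \<le> sh" using w unfolding sh_def a'_def by simp
    have U2: "U' + sh \<le> of_rat U2" unfolding U2_def U'_def by (simp add: of_rat_add)
    have "R C L (ws k + sh) (ws (Suc k) + sh) U2" for k
      using runr_shift[OF wsr sh0 U2] R_runr unfolding Lr_def by blast
    moreover have "ws 0 + sh = w" unfolding ws_def sh_def by simp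
    ultimately have "inf_run C L U2 w" unfolding inf_run_def
      by (intro exI[of _ "\<lambda>k. ws k + sh"]) auto
    then show "\<exists>U. inf_run C L U w" by blast
  qed
  show ?thesis using R0 minpart part1 part2 by blast
qed


theorem mainTheorem7:
  fixes C :: "('c::finite) etp" and L :: rat
  assumes "is_cycle C"
    and "\<exists>a b U. Rinf C L a b U"
  shows "\<exists>amin :: rat.
           (\<exists>b U. Rinf C L amin b U) \<and>
           (\<forall>a. (\<exists>b U. Rinf C L a b U) \<longrightarrow> amin \<le> a) \<and>
           (\<forall>(w :: real) (U :: rat). w < real_of_rat amin \<longrightarrow> \<not> inf_run C L U w) \<and>
           (\<forall>w :: real. real_of_rat amin \<le> w \<longrightarrow> (\<exists>U :: rat. inf_run C L U w))"
  using main[OF assms] .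

end
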